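(* Let $V\geq 0$ be a nonsingular potential on $(-\infty,0]$ (as defined in the context). Let $\gamma_c>0$ be the critical value such that ${}^{\gamma}\mathcal{H}$ (with $\gamma>0$) has a negative eigenvalue exactly when $\gamma>\gamma_c$, and for $\gamma>\gamma_c$ let $E_\gamma<0$ denote this (unique) negative eigenvalue. Assume that $\lim_{\gamma\to\gamma_c^+}E_\gamma=0$. Then $$\gamma_c\leq\int_{-\infty}^0 V(x)\,dx.$$
   Context: A potential $V$ is called nonsingular if: $V$ is continuous on $(-\infty,0]$; as $x\to-\infty$ it decays exponentially, $V(x)=e^{\kappa x}\,(U+O(e^{\kappa x}))$ for some constants $\kappa>0$, $U\neq 0$; and near $x=0$ it has an expansion $V(x)=v_0+v_1x+v_2x^2+\dots$ with $v_0\neq 0$. For $\mathcal{H}=-\frac{d^2}{dx^2}+V(x)$ on $x<0$ in $L^2((-\infty,0),dx)$ and real $\gamma\neq0$, ${}^{\gamma}\mathcal{H}$ is the self-adjoint realization with Robin boundary condition $\psi'(0)=\gamma\psi(0)$. *)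

theory Defs
  imports "HOL-Analysis.Analysis" "HOL-Library.Landau_Symbols"
begin

definition nonsingular_potential :: "(real \<Rightarrow> real) \<Rightarrow> bool" where
  "nonsingular_potential V \<longleftrightarrow>
     continuous_on {..0} V \<and>
     (\<exists>\<kappa> U. \<kappa> > 0 \<and> U \<noteq> 0 \<and>
        (\<lambda>x. V x - exp (\<kappa> * x) * U) \<in> O[at_bot](\<lambda>x. exp (2 * \<kappa> * x))) \<and>
     (\<exists>v :: nat \<Rightarrow> real. v 0 \<noteq> 0 \<and>
        (\<forall>n. (\<lambda>x. V x - (\<Sum>k<n. v k * x ^ k)) \<in> O[at_left 0](\<lambda>x. x ^ n)))"

definition square_integrable_neg :: "(real \<Rightarrow> real) \<Rightarrow> bool" where
  "square_integrable_neg f \<longleftrightarrow> set_integrable lborel {..<0} (\<lambda>x. (f x)^2)"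

text \<open>E is an eigenvalue of the Robin realization of -d^2/dx^2 + V on x<0 with
  boundary condition psi'(0) = gamma psi(0): there is a nonzero eigenfunction psi
  in the operator domain (psi, psi', psi'' square integrable, C^2 up to 0) solving
  -psi'' + V psi = E psi on x < 0.\<close>
definition robin_eigenvalue :: "(real \<Rightarrow> real) \<Rightarrow> real \<Rightarrow> real \<Rightarrow> bool" where
  "robin_eigenvalue V \<gamma> E \<longleftrightarrow>
     (\<exists>\<psi> \<psi>' \<psi>'' :: real \<Rightarrow> real.
        (\<forall>x\<le>0. (\<psi> has_real_derivative \<psi>' x) (at x within {..0})) \<and>
        (\<forall>x\<le>0. (\<psi>' has_real_derivative \<psi>'' x) (at x within {..0})) \<and>
        continuous_on {..0} \<psi>'' \<and>
        square_integrable_neg \<psi> \<and> square_integrable_neg \<psi>' \<and> square_integrable_neg \<psi>'' \<and>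
        (\<exists>x<0. \<psi> x \<noteq> 0) \<and>
        (\<forall>x<0. - \<psi>'' x + V x * \<psi> x = E * \<psi> x) \<and>
        \<psi>' 0 = \<gamma> * \<psi> 0)"

end

theory Submission imports Defs "HOL-Real_Asymp.Real_Asymp" begin

lemma exp_set_integrable:
  fixes \<kappa> :: real assumes "\<kappa> > 0"
  shows "set_integrable lborel {..0} (\<lambda>x. exp (\<kappa> * x))"
proof -
  have "set_integrable lborel (einterval (-\<infinity>) 1) (\<lambda>x. exp (\<kappa> * x))"
  proof (rule interval_integral_FTC_nonneg[where F="\<lambda>x. exp (\<kappa> * x) / \<kappa>" and A=0 and B="exp \<kappa> * inverse \<kappa>"])
    show "- \<infinity> < (1::ereal)" by simp
    fix x :: real
    show "DERIV (\<lambda>x. exp (\<kappa> * x) / \<kappa>) x :> exp (\<kappa> * x)"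
      using assms by (auto intro!: derivative_eq_intros)
    show "isCont (\<lambda>x. exp (\<kappa> * x)) x" by (intro continuous_intros)
  next
    show "AE x in lborel. - \<infinity> < ereal x \<longrightarrow> ereal x < 1 \<longrightarrow> 0 \<le> exp (\<kappa> * x)" by simp
    have "((\<lambda>x. exp (\<kappa> * x) / \<kappa>) \<longlongrightarrow> 0) at_bot"
      using assms by real_asymp
    then show "(((\<lambda>x. exp (\<kappa> * x) / \<kappa>) \<circ> real_of_ereal) \<longlongrightarrow> 0) (at_right (- \<infinity>))"
      by (simp add: ereal_tendsto_simps)
    have "((\<lambda>x. exp (\<kappa> * x) / \<kappa>) \<longlongrightarrow> exp \<kappa> * inverse \<kappa>) (at_left 1)"
      using assms by real_asymp
    then show "(((\<lambda>x. exp (\<kappa> * x) / \<kappa>) \<circ> real_of_ereal) \<longlongrightarrow> exp \<kappa> * inverse \<kappa>) (at_left 1)"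
      by (simp add: ereal_tendsto_simps one_ereal_def)
  qed
  then show ?thesis
    by (rule set_integrable_subset) (auto simp: einterval_def)
qed

lemma V_set_integrable:
  fixes V :: "real \<Rightarrow> real"
  assumes ns: "nonsingular_potential V" and nn: "\<forall>x\<le>0. V x \<ge> 0"
  shows "set_integrable lborel {..0} V"
proof -
  have cont: "continuous_on {..0} V" using ns unfolding nonsingular_potential_def by blast
  obtain \<kappa> U where kp: "\<kappa> > 0" and bo: "(\<lambda>x. V x - exp (\<kappa> * x) * U) \<in> O[at_bot](\<lambda>x. exp (2 * \<kappa> * x))"
    using ns unfolding nonsingular_potential_def by blast
  obtain c where cpos: "c > 0" and ev: "eventually (\<lambda>x. norm (V x - exp (\<kappa> * x) * U) \<le> c * norm (exp (2 * \<kappa> * x))) at_bot"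
    using bo by (elim landau_o.bigE) auto
  obtain N where hN: "\<And>x. x \<le> N \<Longrightarrow> norm (V x - exp (\<kappa> * x) * U) \<le> c * norm (exp (2 * \<kappa> * x))"
    using ev unfolding eventually_at_bot_linorder by blast
  define x0 where "x0 = min N 0"
  have "bounded (V ` {x0..0})"
    by (intro compact_imp_bounded compact_continuous_image continuous_on_subset[OF cont]) (auto simp: x0_def)
  then obtain M where hM: "\<And>x. x \<in> {x0..0} \<Longrightarrow> \<bar>V x\<bar> \<le> M"
    unfolding bounded_real by (meson atLeastAtMost_iff image_eqI)
  define B where "B = \<bar>U\<bar> + c + \<bar>M\<bar> * exp (- \<kappa> * x0)"
  have bound: "V x \<le> B * exp (\<kappa> * x)" if "x \<le> 0" for x
  proof (cases "x \<le> x0")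
    case True
    then have "x \<le> N" by (simp add: x0_def)
    from hN[OF this] have "V x \<le> exp (\<kappa> * x) * \<bar>U\<bar> + c * exp (2 * \<kappa> * x)"
      by (smt (verit, ccfv_SIG) abs_mult_pos exp_gt_zero mult_left_mono real_norm_def)
    moreover have "exp (2 * \<kappa> * x) \<le> exp (\<kappa> * x)"
      using kp that by (simp add: mult_nonneg_nonpos)
    moreover have "0 \<le> \<bar>M\<bar> * exp (- \<kappa> * x0) * exp (\<kappa> * x)" by simp
    ultimately show ?thesis using cpos unfolding B_def
      by (smt (verit, best) distrib_right mult.commute mult_left_mono)
  next
    case False
    then have "V x \<le> \<bar>M\<bar>" using hM[of x] that by auto
    also have "\<bar>M\<bar> \<le> \<bar>M\<bar> * exp (- \<kappa> * x0) * exp (\<kappa> * x)"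
    proof -
      have "exp (- \<kappa> * x0) * exp (\<kappa> * x) = exp (\<kappa> * (x - x0))" by (simp add: algebra_simps flip: exp_add)
      moreover have "1 \<le> exp (\<kappa> * (x - x0))" using False kp by simp
      ultimately show ?thesis by (metis mult.assoc mult_left_mono mult_cancel_left1 abs_ge_zero)
    qed
    also have "\<dots> \<le> B * exp (\<kappa> * x)" unfolding B_def using cpos
      by (intro mult_right_mono) auto
    finally show ?thesis .
  qed
  show ?thesis
  proof (rule set_integrable_bound[where f="\<lambda>x. B * exp (\<kappa> * x)"])
    show "set_integrable lborel {..0} (\<lambda>x. B * exp (\<kappa> * x))"
      using exp_set_integrable[OF kp] by (rule set_integrable_mult_right)
    show "set_borel_measurable lborel {..0} V"
      unfolding set_borel_measurable_def
      using borel_measurable_continuous_on_indicator[OF _ cont] by simp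
    show "AE x in lborel. x \<in> {..0} \<longrightarrow> norm (V x) \<le> norm (B * exp (\<kappa> * x))"
      using bound nn by (auto intro!: AE_I2 order_trans[OF _ abs_ge_self])
  qed
qed


lemma emeasure_Iic_infinite: "emeasure lborel {..(x1::real)} = \<infinity>"
proof (rule ccontr)
  assume "emeasure lborel {..x1} \<noteq> \<infinity>"
  then obtain r where r: "emeasure lborel {..x1} = ennreal r" "r \<ge> 0"
    by (cases "emeasure lborel {..x1}") auto
  have "emeasure lborel {x1 - (r+1)..x1} \<le> emeasure lborel {..x1}"
    by (intro emeasure_mono) auto
  then have "ennreal (r+1) \<le> ennreal r" using r by simp
  then show False using r by (simp add: ennreal_le_iff)
qed

lemma not_integrable_ge:
  fixes f :: "real \<Rightarrow> real"
  assumes fi: "set_integrable lborel {..<0} f" and x1: "x1 < 0" and c: "c > 0"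
    and ge: "\<And>x. x \<le> x1 \<Longrightarrow> f x \<ge> c"
  shows False
proof -
  have "set_integrable lborel {..x1} f"
    by (rule set_integrable_subset[OF fi]) (use x1 in auto)
  then have "set_integrable lborel {..x1} (\<lambda>_. c)"
    by (rule set_integrable_bound) (use ge c in \<open>auto simp: set_borel_measurable_def intro!: AE_I2 order_trans[OF _ abs_ge_self]\<close>)
  then have "set_integrable lborel {..x1} (\<lambda>_. (1/c) * c)"
    by (rule set_integrable_mult_right)
  then have "integrable lborel (indicator {..x1} :: real \<Rightarrow> real)"
    using c by (simp add: set_integrable_def)
  then have "emeasure lborel {..x1} < \<infinity>" by (simp add: integrable_indicator_iff)
  then show False by (simp add: emeasure_Iic_infinite)
qed


lemma key:
  fixes V :: "real \<Rightarrow> real"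
  assumes nn: "\<forall>x\<le>0. V x \<ge> 0" and cont: "continuous_on {..0} V"
    and Vi: "set_integrable lborel {..0} V"
    and k: "k > 0" and gp: "\<gamma> > 0" and ev: "robin_eigenvalue V \<gamma> (-(k^2))"
  shows "\<gamma> \<le> (LINT x:{..0}|lborel. V x) + k"
proof -
  obtain p p1 p2 :: "real \<Rightarrow> real" where
    d1: "\<forall>x\<le>0. (p has_real_derivative p1 x) (at x within {..0})" and
    d2: "\<forall>x\<le>0. (p1 has_real_derivative p2 x) (at x within {..0})" and
    s0: "square_integrable_neg p" and s1: "square_integrable_neg p1" and
    nz: "\<exists>x<0. p x \<noteq> 0" and eq: "\<forall>x<0. - p2 x + V x * p x = -(k^2) * p x" and
    bc: "p1 0 = \<gamma> * p 0"
    using ev unfolding robin_eigenvalue_def by blast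
  have D1: "(p has_real_derivative p1 x) (at x)" if "x < 0" for x
  proof -
    have xle: "x \<le> 0" using that by simp
    have "(p has_real_derivative p1 x) (at x within {..0})" using d1 xle by blast
    then have "(p has_real_derivative p1 x) (at x within {..<0})"
      by (rule has_field_derivative_subset) (simp add: subset_eq)
    moreover have "at x within {..<0} = at x"
      by (rule at_within_open) (use that in simp_all)
    ultimately show ?thesis by simp
  qed
  have D2: "(p1 has_real_derivative p2 x) (at x)" if "x < 0" for x
  proof -
    have xle: "x \<le> 0" using that by simp
    have "(p1 has_real_derivative p2 x) (at x within {..0})" using d2 xle by blast
    then have "(p1 has_real_derivative p2 x) (at x within {..<0})"
      by (rule has_field_derivative_subset) (simp add: subset_eq)
    moreover have "at x within {..<0} = at x"
      by (rule at_within_open) (use that in simp_all)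
    ultimately show ?thesis by simp
  qed
  have eq2: "p2 x = (V x + k^2) * p x" if "x < 0" for x
    using eq that by (auto simp: algebra_simps)
  have S0: "set_integrable lborel {..<0} (\<lambda>x. (p x)^2)"
    using s0 by (simp add: square_integrable_neg_def)
  have S1: "set_integrable lborel {..<0} (\<lambda>x. (p1 x)^2)"
    using s1 by (simp add: square_integrable_neg_def)
  have S01: "set_integrable lborel {..<0} (\<lambda>x. (p x)^2 + (p1 x)^2)"
    using S0 S1 by (rule set_integral_add(1))
  define h where "h x = p x * p1 x" for x
  have Dh: "(h has_real_derivative (p1 x * p1 x + (V x + k^2) * (p x * p x))) (at x)" if "x < 0" for x
    unfolding h_def
    by (rule DERIV_cong[OF DERIV_mult[OF D1[OF that] D2[OF that]]]) (simp add: eq2[OF that] algebra_simps)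
  have monoh: "h x \<le> h y" if "x \<le> y" "y < 0" for x y
    using that(1)
  proof (rule DERIV_nonneg_imp_nondecreasing)
    fix t assume "x \<le> t" "t \<le> y"
    then have "t < 0" using that by simp
    then show "\<exists>d. DERIV h t :> d \<and> d \<ge> 0"
      using Dh[of t] nn k by (intro exI[of _ "p1 t * p1 t + (V t + k^2) * (p t * p t)"]) auto
  qed
  have hnn: "h x \<ge> 0" if "x < 0" for x
  proof (rule ccontr)
    assume "\<not> h x \<ge> 0"
    then have hx: "h x < 0" by simp
    show False
    proof (rule not_integrable_ge[OF S01 that, of "- 2 * h x"])
      show "0 < - 2 * h x" using hx by simp
      fix y assume "y \<le> x"
      then have "h y \<le> h x" using monoh that by blast
      moreover have "0 \<le> (p y + p1 y)^2" by simp
      ultimately show "- 2 * h x \<le> (p y)^2 + (p1 y)^2"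
        unfolding h_def by (simp add: power2_eq_square algebra_simps)
    qed
  qed
  define z where "z x = p1 x * p1 x - k^2 * (p x * p x)" for x
  have Dz: "(z has_real_derivative (2 * V x * h x)) (at x)" if "x < 0" for x
    unfolding z_def
    by (rule DERIV_cong[OF DERIV_diff[OF DERIV_mult[OF D2[OF that] D2[OF that]] DERIV_cmult[OF DERIV_mult[OF D1[OF that] D1[OF that]]]]])
      (simp add: eq2[OF that] h_def algebra_simps)
  have monoz: "z x \<le> z y" if "x \<le> y" "y < 0" for x y
    using that(1)
  proof (rule DERIV_nonneg_imp_nondecreasing)
    fix t assume "x \<le> t" "t \<le> y"
    then have "t < 0" using that by simp
    then show "\<exists>d. DERIV z t :> d \<and> d \<ge> 0"
      using Dz[of t] nn hnn[of t] by (intro exI[of _ "2 * V t * h t"]) auto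
  qed
  have znn: "z x \<ge> 0" if "x < 0" for x
  proof (rule ccontr)
    assume "\<not> z x \<ge> 0"
    then have zx: "z x < 0" by simp
    show False
    proof (rule not_integrable_ge[OF S0 that, of "- z x / k^2"])
      show "0 < - z x / k^2" using zx k by (simp add: divide_neg_pos)
      fix y assume "y \<le> x"
      then have "z y \<le> z x" using monoz that by blast
      then have "- z x \<le> k^2 * (p y)^2"
        unfolding z_def by (simp add: power2_eq_square) (smt (verit) zero_le_square)
      then show "- z x / k^2 \<le> (p y)^2"
        using k by (simp add: field_simps)
    qed
  qed
  have hk: "h x \<ge> k * (p x)^2" if "x < 0" for x
  proof -
    have "(k * \<bar>p x\<bar>)^2 \<le> (p1 x)^2"
      using znn[OF that] unfolding z_def by (simp add: power2_eq_square algebra_simps)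
    then have "k * \<bar>p x\<bar> \<le> \<bar>p1 x\<bar>"
      using k by (metis abs_le_square_iff abs_mult abs_of_pos abs_abs)
    then have "k * \<bar>p x\<bar> * \<bar>p x\<bar> \<le> \<bar>p1 x\<bar> * \<bar>p x\<bar>"
      by (simp add: mult_right_mono)
    moreover have "\<bar>h x\<bar> = h x" using hnn[OF that] by simp
    ultimately show ?thesis unfolding h_def
      by (simp add: abs_mult power2_eq_square mult.commute mult.left_commute)
  qed
  have pcont: "continuous_on {..0} p"
    using d1 by (auto simp: continuous_on_eq_continuous_within intro: DERIV_continuous)
  have gle: "(p x)^2 * exp (-2 * k * x) \<le> (p 0)^2" if "x \<le> 0" for x
  proof -
    have "(p x)^2 * exp (-2 * k * x) \<le> (p 0)^2 * exp (-2 * k * 0)"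
      using that
    proof (rule DERIV_nonneg_imp_increasing_open)
      fix t assume t: "x < t" "t < 0"
      have "((\<lambda>x. (p x)^2 * exp (-2 * k * x)) has_real_derivative
              (2 * h t - 2 * k * (p t)^2) * exp (-2 * k * t)) (at t)"
        using D1[of t] t by (auto intro!: derivative_eq_intros simp: h_def algebra_simps power2_eq_square)
      moreover have "(2 * h t - 2 * k * (p t)^2) * exp (-2 * k * t) \<ge> 0"
        using hk[of t] t by simp
      ultimately show "\<exists>d. DERIV (\<lambda>x. (p x)^2 * exp (-2 * k * x)) t :> d \<and> d \<ge> 0" by blast
    next
      show "continuous_on {x..0} (\<lambda>x. (p x)^2 * exp (-2 * k * x))"
        by (intro continuous_intros continuous_on_subset[OF pcont]) auto
    qed
    then show ?thesis by simp
  qed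
  have p0: "p 0 \<noteq> 0"
  proof
    assume "p 0 = 0"
    obtain x where "x < 0" "p x \<noteq> 0" using nz by blast
    then have "(p x)^2 * exp (-2 * k * x) > 0" by simp
    with gle[of x] \<open>x < 0\<close> \<open>p 0 = 0\<close> show False by simp
  qed
  have pb: "\<bar>p x\<bar> \<le> \<bar>p 0\<bar> * exp (k * x)" if "x \<le> 0" for x
  proof -
    have "(p x)^2 = (p x)^2 * exp (-2 * k * x) * exp (2 * k * x)"
      by (simp add: mult.assoc flip: exp_add)
    also have "\<dots> \<le> (p 0)^2 * exp (2 * k * x)"
      using gle[OF that] by (simp add: mult_right_mono)
    also have "\<dots> = (\<bar>p 0\<bar> * exp (k * x))^2"
    proof -
      have e: "exp (2 * k * x) = (exp (k * x))^2"
        by (simp add: power2_eq_square flip: exp_add)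
      show ?thesis unfolding power_mult_distrib power2_abs e ..
    qed
    finally show ?thesis
      by (metis abs_le_square_iff abs_mult abs_of_pos abs_abs exp_gt_zero)
  qed
  define I where "I = (LINT x:{..0}|lborel. V x)"
  have VI: "V integrable_on {..0}" "I = integral {..0} V"
    using set_borel_integral_eq_integral[OF Vi] I_def by auto
  have small: "\<exists>a<0. \<bar>p1 a\<bar> < \<epsilon>" if "\<epsilon> > 0" for \<epsilon>
  proof (rule ccontr)
    assume "\<not> (\<exists>a<0. \<bar>p1 a\<bar> < \<epsilon>)"
    then have ge: "\<And>a. a < 0 \<Longrightarrow> \<epsilon> \<le> \<bar>p1 a\<bar>" by (meson not_less)
    show False
    proof (rule not_integrable_ge[OF S1, of "-1" "\<epsilon>^2"])
      show "(-1::real) < 0" by simp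
      show "0 < \<epsilon>^2" using that by simp
      fix y :: real assume "y \<le> -1"
      then have "\<bar>\<epsilon>\<bar> \<le> \<bar>p1 y\<bar>" using ge[of y] that by simp
      then show "\<epsilon>^2 \<le> (p1 y)^2" by (simp add: abs_le_square_iff)
    qed
  qed
  have bound: "\<bar>p1 0 - p1 a\<bar> \<le> \<bar>p 0\<bar> * (I + k)" if a: "a < 0" for a
  proof -
    have ftc: "(p2 has_integral p1 0 - p1 a) {a..0}"
    proof (rule fundamental_theorem_of_calculus)
      show "a \<le> 0" using a by simp
      fix x assume x: "x \<in> {a..0}"
      then have "(p1 has_real_derivative p2 x) (at x within {..0})" using d2 by simp
      then have "(p1 has_real_derivative p2 x) (at x within {a..0})"
        by (rule has_field_derivative_subset) (simp add: subset_eq)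
      then show "(p1 has_vector_derivative p2 x) (at x within {a..0})"
        by (simp add: has_real_derivative_iff_has_vector_derivative)
    qed
    define q where "q x = (V x + k^2) * p x" for x
    have "(p2 has_integral p1 0 - p1 a) {a..0} = (q has_integral p1 0 - p1 a) {a..0}"
      by (rule has_integral_spike_finite_eq[of "{0}"]) (auto simp: q_def eq2)
    with ftc have ftcq: "(q has_integral p1 0 - p1 a) {a..0}" by simp
    define G where "G x = \<bar>p 0\<bar> * (V x + k^2 * exp (k * x))" for x
    have Vint: "(V has_integral integral {a..0} V) {a..0}"
      by (intro integrable_integral integrable_continuous_interval continuous_on_subset[OF cont]) auto
    have Eint: "((\<lambda>x. exp (k * x)) has_integral (exp (k * 0) / k - exp (k * a) / k)) {a..0}"
    proof (rule fundamental_theorem_of_calculus)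
      show "a \<le> 0" using a by simp
      fix x assume x: "x \<in> {a..0}"
      have "((\<lambda>x. exp (k * x) / k) has_real_derivative exp (k * x)) (at x within {a..0})"
        using k by (auto intro!: derivative_eq_intros)
      then show "((\<lambda>x. exp (k * x) / k) has_vector_derivative exp (k * x)) (at x within {a..0})"
        by (simp add: has_real_derivative_iff_has_vector_derivative)
    qed
    have Gint: "(G has_integral \<bar>p 0\<bar> * (integral {a..0} V + k^2 * (exp (k * 0) / k - exp (k * a) / k))) {a..0}"
      unfolding G_def
      by (intro has_integral_mult_right has_integral_add Vint Eint)
    have nb: "norm (q x) \<le> G x" if x: "x \<in> {a..0}" for x
    proof -
      have e1: "exp (k * x) \<le> 1" using x k by (simp add: mult_nonneg_nonpos)
      have V0: "V x \<ge> 0" using nn x by simp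
      have "norm (q x) = (V x + k^2) * \<bar>p x\<bar>" unfolding q_def using V0 by (simp add: abs_mult)
      also have "\<dots> \<le> (V x + k^2) * (\<bar>p 0\<bar> * exp (k * x))"
        using pb[of x] x V0 by (intro mult_left_mono) auto
      also have "\<dots> = \<bar>p 0\<bar> * (V x * exp (k * x) + k^2 * exp (k * x))" by (simp add: algebra_simps)
      also have "\<dots> \<le> G x" unfolding G_def
        using e1 V0 by (intro mult_left_mono add_right_mono) (auto simp: mult_left_le)
      finally show ?thesis .
    qed
    have "norm (integral {a..0} q) \<le> integral {a..0} G"
      by (rule integral_norm_bound_integral) (use ftcq Gint nb in auto)
    then have "\<bar>p1 0 - p1 a\<bar> \<le> \<bar>p 0\<bar> * (integral {a..0} V + k^2 * (exp (k * 0) / k - exp (k * a) / k))"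
      using integral_unique[OF ftcq] integral_unique[OF Gint] by simp
    also have "\<dots> \<le> \<bar>p 0\<bar> * (I + k)"
    proof (intro mult_left_mono add_mono)
      show "integral {a..0} V \<le> I" unfolding VI(2)
        by (rule integral_subset_le) (use nn Vint VI(1) in auto)
      have "k^2 * (exp (k * 0) / k - exp (k * a) / k) = k * (1 - exp (k * a))"
        using k by (simp add: field_simps power2_eq_square)
      also have "\<dots> \<le> k" using k by simp
      finally show "k^2 * (exp (k * 0) / k - exp (k * a) / k) \<le> k" .
    qed simp
    finally show ?thesis .
  qed
  have main: "\<gamma> * \<bar>p 0\<bar> \<le> \<bar>p 0\<bar> * (I + k)"
  proof (rule ccontr)
    assume "\<not> ?thesis"
    then have "\<gamma> * \<bar>p 0\<bar> - \<bar>p 0\<bar> * (I + k) > 0" by simp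
    then obtain a where a: "a < 0" "\<bar>p1 a\<bar> < \<gamma> * \<bar>p 0\<bar> - \<bar>p 0\<bar> * (I + k)"
      using small by blast
    have "\<gamma> * \<bar>p 0\<bar> = \<bar>p1 0\<bar>" using bc gp by (simp add: abs_mult)
    also have "\<dots> \<le> \<bar>p1 a\<bar> + \<bar>p1 0 - p1 a\<bar>" by simp
    also have "\<dots> < \<gamma> * \<bar>p 0\<bar>" using a bound[OF a(1)] by simp
    finally show False by simp
  qed
  then have "\<bar>p 0\<bar> * \<gamma> \<le> \<bar>p 0\<bar> * (I + k)" by (simp add: mult.commute)
  then have "\<gamma> \<le> I + k" by (rule mult_left_le_imp_le) (use p0 in simp)
  then show ?thesis by (simp add: I_def)
qed


theorem proposition6:
  fixes V :: "real \<Rightarrow> real" and \<gamma>c :: real and E :: "real \<Rightarrow> real"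
  assumes nonsing: "nonsingular_potential V"
    and nonneg: "\<forall>x\<le>0. V x \<ge> 0"
    and gc_pos: "\<gamma>c > 0"
    and critical: "\<forall>\<gamma>>0. (\<exists>e<0. robin_eigenvalue V \<gamma> e) \<longleftrightarrow> \<gamma> > \<gamma>c"
    and E_eig: "\<forall>\<gamma>>\<gamma>c. E \<gamma> < 0 \<and> robin_eigenvalue V \<gamma> (E \<gamma>)
                   \<and> (\<forall>e<0. robin_eigenvalue V \<gamma> e \<longrightarrow> e = E \<gamma>)"
    and E_lim: "(E \<longlongrightarrow> 0) (at_right \<gamma>c)"
  shows "\<gamma>c \<le> (LINT x:{..0}|lborel. V x)"
proof -
  define I where "I = (LINT x:{..0}|lborel. V x)"
  have cont: "continuous_on {..0} V" using nonsing unfolding nonsingular_potential_def by blast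
  have Vi: "set_integrable lborel {..0} V" by (rule V_set_integrable[OF nonsing nonneg])
  have ineq: "\<gamma> \<le> I + sqrt (- E \<gamma>)" if g: "\<gamma> > \<gamma>c" for \<gamma>
  proof -
    have En: "E \<gamma> < 0" and ev: "robin_eigenvalue V \<gamma> (E \<gamma>)" using E_eig g by auto
    define k where "k = sqrt (- E \<gamma>)"
    have k: "k > 0" using En by (simp add: k_def)
    have "-(k^2) = E \<gamma>" using En by (simp add: k_def)
    with ev have ev': "robin_eigenvalue V \<gamma> (-(k^2))" by simp
    have "\<gamma> \<le> (LINT x:{..0}|lborel. V x) + k"
      by (rule key[OF nonneg cont Vi k _ ev']) (use g gc_pos in simp)
    then show ?thesis by (simp add: I_def k_def)
  qed
  have "\<gamma>c \<le> I"
  proof (rule tendsto_le[where F="at_right \<gamma>c" and f="\<lambda>\<gamma>. I + sqrt (- E \<gamma>)" and g="\<lambda>\<gamma>. \<gamma>"])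
    show "at_right \<gamma>c \<noteq> bot" by simp
    have "((\<lambda>\<gamma>. I + sqrt (- E \<gamma>)) \<longlongrightarrow> I + sqrt (- 0)) (at_right \<gamma>c)"
      by (intro tendsto_intros E_lim)
    then show "((\<lambda>\<gamma>. I + sqrt (- E \<gamma>)) \<longlongrightarrow> I) (at_right \<gamma>c)" by simp
    show "((\<lambda>\<gamma>. \<gamma>) \<longlongrightarrow> \<gamma>c) (at_right \<gamma>c)" by (rule tendsto_ident_at)
    show "eventually (\<lambda>\<gamma>. \<gamma> \<le> I + sqrt (- E \<gamma>)) (at_right \<gamma>c)"
      using eventually_at_right_less[of \<gamma>c] by eventually_elim (use ineq in auto)
  qed
  then show ?thesis by (simp add: I_def)
qed

end
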